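(* Let $L$ be a nondegenerate $\alpha$-semi-stable $\mathds R^d$-valued Lévy process. Then: (a) If $0<\alpha<1$, then $L$ has Sobolev index $\alpha$ if and only if $L$ is strictly $\alpha$-semi-stable. (b) If $1<\alpha\le2$, then $L$ has Sobolev index $\alpha$. (c) If $L$ is real-valued and strictly $\alpha$-stable with $\alpha=1$ and has Sobolev index $1$, then its symbol is of the form $A(u)=c|u|+i\tau u$ with $c>0$ and $\tau\in\mathds R$. (d) If $L$ is real-valued and $\alpha$-stable with $\alpha=1$, then $L$ has Sobolev index $1$ if and only if $L$ is strictly $1$-stable.
   Context: For a Lévy process with characteristics $(b,\sigma,F)$ w.r.t. a truncation function $h$, the symbol is $A(\xi)=\frac12\langle\xi,\sigma\xi\rangle+i\langle\xi,b\rangle-\int(e^{-i\langle\xi,y\rangle}-1+i\langle\xi,h(y)\rangle)F(dy)$, so $Ee^{i\langle\xi,L_t\rangle}=e^{-tA(-\xi)}$. A Lévy process is semi-stable (resp. stable) if for some (resp. every) $0<a\ne1$ there exist $b>0$ and $c\in\mathds R^d$ with $aA(u)=A(bu)+i\langle c,u\rangle$ for all $u$. Let $\Gamma$ be the set of $a>0$ for which such $b,c$ exist; the process is $\alpha$-semi-stable if it is semi-stable and $a=b^\alpha$ for all $a\in\Gamma$, and $\alpha$-stable if it is stable and $a=b^\alpha$ for all $a>0$. It is strictly (semi-)stable, resp. strictly $\alpha$-(semi-)stable, if in addition the relation holds with $c=0$. $L$ is nondegenerate if for some (equivalently every) $t>0$ the support of $P^{L_t}$ is not contained in any affine hyperplane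 of $\mathds R^d$. The symbol has Sobolev index $\alpha\in(0,2]$ if there are $0\le\beta<\alpha$, $C_1,C_3\ge0$, $C_2>0$ with $|A(\xi)|\le C_1(1+|\xi|^2)^{\alpha/2}$ and $\Re(A(\xi))\ge C_2|\xi|^\alpha-C_3(1+|\xi|^2)^{\beta/2}$ for all $\xi$. *)

theory Defs
  imports "HOL-Probability.Probability"
begin

definition levy_process :: "'w measure \<Rightarrow> (real \<Rightarrow> 'w \<Rightarrow> 'a::euclidean_space) \<Rightarrow> bool" where
  "levy_process M L \<longleftrightarrow>
     prob_space M \<and>
     (\<forall>t\<ge>0. L t \<in> borel_measurable M) \<and>
     (AE \<omega> in M. L 0 \<omega> = 0) \<and>
     (\<forall>(n::nat) (t::nat \<Rightarrow> real). (\<forall>k. 0 \<le> t k) \<and> mono t \<longrightarrow>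
        prob_space.indep_vars M (\<lambda>_. borel) (\<lambda>k \<omega>. L (t (Suc k)) \<omega> - L (t k) \<omega>) {..<n}) \<and>
     (\<forall>s t. 0 \<le> s \<and> s \<le> t \<longrightarrow>
        distr M borel (\<lambda>\<omega>. L t \<omega> - L s \<omega>) = distr M borel (L (t - s))) \<and>
     (\<forall>t\<ge>0. \<forall>e>0. ((\<lambda>s. measure M {\<omega> \<in> space M. dist (L s \<omega>) (L t \<omega>) > e}) \<longlongrightarrow> 0)
        (at t within {0..}))"

definition truncation_function :: "('a::euclidean_space \<Rightarrow> 'a) \<Rightarrow> bool" where
  "truncation_function h \<longleftrightarrow> h \<in> borel_measurable borel \<and> bounded (range h) \<and>
     (\<exists>r>0. \<forall>y. norm y < r \<longrightarrow> h y = y)"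

definition covariance_operator :: "('a::euclidean_space \<Rightarrow> 'a) \<Rightarrow> bool" where
  "covariance_operator \<sigma> \<longleftrightarrow> linear \<sigma> \<and> (\<forall>x y. \<sigma> x \<bullet> y = x \<bullet> \<sigma> y) \<and> (\<forall>x. 0 \<le> x \<bullet> \<sigma> x)"

definition levy_measure :: "'a::euclidean_space measure \<Rightarrow> bool" where
  "levy_measure F \<longleftrightarrow> sets F = sets borel \<and> emeasure F {0} = 0 \<and>
     (\<integral>\<^sup>+ y. ennreal (min 1 ((norm y)\<^sup>2)) \<partial>F) < \<infinity>"

definition levy_sym :: "('a::euclidean_space \<Rightarrow> 'a) \<Rightarrow> 'a \<Rightarrow> ('a \<Rightarrow> 'a) \<Rightarrow> 'a measure \<Rightarrow> 'a \<Rightarrow> complex" where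
  "levy_sym h b \<sigma> F \<xi> =
     complex_of_real ((\<xi> \<bullet> \<sigma> \<xi>) / 2) + \<i> * complex_of_real (\<xi> \<bullet> b)
     - (CLINT y|F. exp (- \<i> * complex_of_real (\<xi> \<bullet> y)) - 1 + \<i> * complex_of_real (\<xi> \<bullet> h y))"

definition levy_symbol :: "'w measure \<Rightarrow> (real \<Rightarrow> 'w \<Rightarrow> 'a::euclidean_space) \<Rightarrow> ('a \<Rightarrow> complex) \<Rightarrow> bool" where
  "levy_symbol M L A \<longleftrightarrow>
     (\<exists>h b \<sigma> F. truncation_function h \<and> covariance_operator \<sigma> \<and> levy_measure F \<and>
        A = levy_sym h b \<sigma> F \<and>
        (\<forall>t\<ge>0. \<forall>\<xi>. (CLINT \<omega>|M. exp (\<i> * complex_of_real (\<xi> \<bullet> L t \<omega>)))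
                      = exp (- complex_of_real t * A (- \<xi>))))"

definition measure_support :: "'a::metric_space measure \<Rightarrow> 'a set" where
  "measure_support \<mu> = {x. \<forall>e>0. emeasure \<mu> (ball x e) > 0}"

definition nondegenerate :: "'w measure \<Rightarrow> (real \<Rightarrow> 'w \<Rightarrow> 'a::euclidean_space) \<Rightarrow> bool" where
  "nondegenerate M L \<longleftrightarrow> (\<exists>t>0. \<not> (\<exists>a c. a \<noteq> 0 \<and>
      measure_support (distr M borel (L t)) \<subseteq> {x. a \<bullet> x = c}))"

definition stab_rel :: "('a::euclidean_space \<Rightarrow> complex) \<Rightarrow> real \<Rightarrow> real \<Rightarrow> 'a \<Rightarrow> bool" where
  "stab_rel A a b c \<longleftrightarrow> (\<forall>u. complex_of_real a * A u = A (b *\<^sub>R u) + \<i> * complex_of_real (c \<bullet> u))"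

definition stab_Gamma :: "('a::euclidean_space \<Rightarrow> complex) \<Rightarrow> real set" where
  "stab_Gamma A = {a. a > 0 \<and> (\<exists>b>0. \<exists>c. stab_rel A a b c)}"

definition semi_stable :: "('a::euclidean_space \<Rightarrow> complex) \<Rightarrow> bool" where
  "semi_stable A \<longleftrightarrow> (\<exists>a\<in>stab_Gamma A. a \<noteq> 1)"

definition stable :: "('a::euclidean_space \<Rightarrow> complex) \<Rightarrow> bool" where
  "stable A \<longleftrightarrow> (\<forall>a. 0 < a \<and> a \<noteq> 1 \<longrightarrow> a \<in> stab_Gamma A)"

definition alpha_semi_stable :: "real \<Rightarrow> ('a::euclidean_space \<Rightarrow> complex) \<Rightarrow> bool" where
  "alpha_semi_stable \<alpha> A \<longleftrightarrow> semi_stable A \<and>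
     (\<forall>a b c. a > 0 \<and> b > 0 \<and> stab_rel A a b c \<longrightarrow> a = b powr \<alpha>)"

definition alpha_stable :: "real \<Rightarrow> ('a::euclidean_space \<Rightarrow> complex) \<Rightarrow> bool" where
  "alpha_stable \<alpha> A \<longleftrightarrow> stable A \<and>
     (\<forall>a b c. a > 0 \<and> b > 0 \<and> stab_rel A a b c \<longrightarrow> a = b powr \<alpha>)"

definition strictly_semi_stable :: "('a::euclidean_space \<Rightarrow> complex) \<Rightarrow> bool" where
  "strictly_semi_stable A \<longleftrightarrow> (\<exists>a b. a > 0 \<and> a \<noteq> 1 \<and> b > 0 \<and> stab_rel A a b 0)"

definition strictly_stable :: "('a::euclidean_space \<Rightarrow> complex) \<Rightarrow> bool" where
  "strictly_stable A \<longleftrightarrow> (\<forall>a. 0 < a \<and> a \<noteq> 1 \<longrightarrow> (\<exists>b>0. stab_rel A a b 0))"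

definition strictly_alpha_semi_stable :: "real \<Rightarrow> ('a::euclidean_space \<Rightarrow> complex) \<Rightarrow> bool" where
  "strictly_alpha_semi_stable \<alpha> A \<longleftrightarrow> alpha_semi_stable \<alpha> A \<and> strictly_semi_stable A"

definition strictly_alpha_stable :: "real \<Rightarrow> ('a::euclidean_space \<Rightarrow> complex) \<Rightarrow> bool" where
  "strictly_alpha_stable \<alpha> A \<longleftrightarrow> alpha_stable \<alpha> A \<and> strictly_stable A"

definition sobolev_index :: "real \<Rightarrow> ('a::euclidean_space \<Rightarrow> complex) \<Rightarrow> bool" where
  "sobolev_index \<alpha> A \<longleftrightarrow> 0 < \<alpha> \<and> \<alpha> \<le> 2 \<and>
     (\<exists>\<beta> C1 C2 C3. 0 \<le> \<beta> \<and> \<beta> < \<alpha> \<and> C1 \<ge> 0 \<and> C2 > 0 \<and> C3 \<ge> 0 \<and>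
        (\<forall>\<xi>. cmod (A \<xi>) \<le> C1 * (1 + (norm \<xi>)\<^sup>2) powr (\<alpha> / 2) \<and>
              Re (A \<xi>) \<ge> C2 * norm \<xi> powr \<alpha> - C3 * (1 + (norm \<xi>)\<^sup>2) powr (\<beta> / 2)))"

end

theory Submission
  imports Defs
begin


lemma iexp_quad: "cmod (exp (\<i> * complex_of_real x) - 1 - \<i> * complex_of_real x) \<le> x^2 / 2"
proof -
  have "cmod (exp (\<i> * complex_of_real x) - (\<Sum>k \<le> 1. (\<i> * x)^k / fact k)) \<le> \<bar>x\<bar>^(Suc 1) / fact (Suc 1)"
    by (rule iexp_approx1)
  then show ?thesis by (simp add: algebra_simps power2_eq_square)
qed

lemma levy_integrand_bound:
  fixes h :: "'a::euclidean_space \<Rightarrow> 'a"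
  assumes r: "r > 0" "r \<le> 1" "\<And>y. norm y < r \<Longrightarrow> h y = y"
    and H: "\<And>y. norm (h y) \<le> H" and R: "norm \<xi> \<le> R"
  shows "cmod (exp (- \<i> * complex_of_real (\<xi> \<bullet> y)) - 1 + \<i> * complex_of_real (\<xi> \<bullet> h y))
     \<le> max (R^2/2) ((2 + R * H) / r^2) * min 1 ((norm y)\<^sup>2)"
proof (cases "norm y < r")
  case True
  have hy: "h y = y" using r True by auto
  have "exp (- \<i> * complex_of_real (\<xi> \<bullet> y)) - 1 + \<i> * complex_of_real (\<xi> \<bullet> h y)
     = exp (\<i> * complex_of_real (- (\<xi> \<bullet> y))) - 1 - \<i> * complex_of_real (- (\<xi> \<bullet> y))"
    by (simp add: hy)
  then have "cmod (exp (- \<i> * complex_of_real (\<xi> \<bullet> y)) - 1 + \<i> * complex_of_real (\<xi> \<bullet> h y))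
      \<le> (- (\<xi> \<bullet> y))^2 / 2" using iexp_quad by metis
  also have "\<dots> \<le> (R * norm y)^2 / 2"
  proof -
    have "\<bar>\<xi> \<bullet> y\<bar> \<le> R * norm y"
      using Cauchy_Schwarz_ineq2[of \<xi> y] R by (meson mult_right_mono norm_ge_zero order_trans)
    then have "\<bar>\<xi> \<bullet> y\<bar>^2 \<le> (R * norm y)^2" by (intro power_mono) auto
    then show ?thesis by simp
  qed
  also have "\<dots> = R^2/2 * (norm y)\<^sup>2" by (simp add: power_mult_distrib)
  also have "\<dots> = R^2/2 * min 1 ((norm y)\<^sup>2)"
  proof -
    have "norm y \<le> 1" using True r by auto
    then have "(norm y)\<^sup>2 \<le> 1" by (simp add: power_le_one)
    then show ?thesis by simp
  qed
  also have "\<dots> \<le> max (R^2/2) ((2 + R * H) / r^2) * min 1 ((norm y)\<^sup>2)"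
    by (intro mult_right_mono) auto
  finally show ?thesis .
next
  case False
  have R0: "R \<ge> 0" using R norm_ge_zero order_trans by blast
  have H0: "H \<ge> 0" using H[of 0] norm_ge_zero order_trans by blast
  have "cmod (exp (- \<i> * complex_of_real (\<xi> \<bullet> y)) - 1 + \<i> * complex_of_real (\<xi> \<bullet> h y))
      \<le> cmod (exp (- \<i> * complex_of_real (\<xi> \<bullet> y))) + cmod 1 + cmod (\<i> * complex_of_real (\<xi> \<bullet> h y))"
    by (smt (verit) norm_triangle_ineq norm_triangle_ineq4)
  also have "\<dots> \<le> 2 + R * H"
  proof -
    have e: "cmod (exp (- \<i> * complex_of_real (\<xi> \<bullet> y))) = 1" by (simp add: norm_exp_eq_Re)
    have "\<bar>\<xi> \<bullet> h y\<bar> \<le> R * H"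
      using Cauchy_Schwarz_ineq2[of \<xi> "h y"] R H[of y] R0
      by (meson mult_mono norm_ge_zero order_trans)
    then show ?thesis using e by (simp add: norm_mult)
  qed
  also have "\<dots> = (2 + R * H) / r^2 * r^2" using r by simp
  also have "\<dots> \<le> (2 + R * H) / r^2 * min 1 ((norm y)\<^sup>2)"
  proof (intro mult_left_mono)
    have "r^2 \<le> (norm y)^2" using False r by (simp add: power_mono)
    moreover have "r^2 \<le> 1" using r by (simp add: power_le_one)
    ultimately show "r^2 \<le> min 1 ((norm y)\<^sup>2)" by simp
    show "0 \<le> (2 + R * H) / r^2" using R0 H0 by simp
  qed
  also have "\<dots> \<le> max (R^2/2) ((2 + R * H) / r^2) * min 1 ((norm y)\<^sup>2)"
    by (intro mult_right_mono) auto
  finally show ?thesis .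
qed


lemma levy_sym_cont:
  fixes h :: "'a::euclidean_space \<Rightarrow> 'a"
  assumes ht: "truncation_function h" and cs: "covariance_operator \<sigma>" and lm: "levy_measure F"
  shows "continuous_on UNIV (levy_sym h b \<sigma> F)"
proof -
  have hm[measurable]: "h \<in> borel_measurable borel" and hb: "bounded (range h)"
    and "\<exists>r>0. \<forall>y. norm y < r \<longrightarrow> h y = y" using ht unfolding truncation_function_def by auto
  then obtain r0 where r0: "r0 > 0" "\<And>y. norm y < r0 \<Longrightarrow> h y = y" by auto
  obtain H where H: "\<And>y. norm (h y) \<le> H" using hb unfolding bounded_iff by auto
  define r where "r = min r0 1"
  have r: "r > 0" "r \<le> 1" "\<And>y. norm y < r \<Longrightarrow> h y = y" using r0 by (auto simp: r_def)
  have sF: "sets F = sets borel" and fin: "(\<integral>\<^sup>+ y. ennreal (min 1 ((norm y)\<^sup>2)) \<partial>F) < \<infinity>"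
    using lm unfolding levy_measure_def by auto
  define g where "g \<xi> y = exp (- \<i> * complex_of_real (\<xi> \<bullet> y)) - 1 + \<i> * complex_of_real (\<xi> \<bullet> h y)" for \<xi> y
  have gm: "g \<xi> \<in> borel_measurable F" for \<xi>
  proof -
    have "g \<xi> \<in> borel_measurable borel" unfolding g_def by measurable
    then show ?thesis by (simp add: measurable_cong_sets[OF sF refl])
  qed
  have wm: "(\<lambda>y::'a. min 1 ((norm y)\<^sup>2)) \<in> borel_measurable F"
  proof -
    have "(\<lambda>y::'a. min 1 ((norm y)\<^sup>2)) \<in> borel_measurable borel" by measurable
    then show ?thesis by (simp add: measurable_cong_sets[OF sF refl])
  qed
  have wint: "integrable F (\<lambda>y. min 1 ((norm y)\<^sup>2))"
  proof (rule integrableI_bounded)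
    show "(\<lambda>y::'a. min 1 ((norm y)\<^sup>2)) \<in> borel_measurable F" by (rule wm)
    have "(\<integral>\<^sup>+ y. ennreal (norm (min 1 ((norm y)\<^sup>2))) \<partial>F) = (\<integral>\<^sup>+ y. ennreal (min 1 ((norm y)\<^sup>2)) \<partial>F)"
      by (intro nn_integral_cong) auto
    then show "(\<integral>\<^sup>+ y. ennreal (norm (min 1 ((norm y)\<^sup>2))) \<partial>F) < \<infinity>" using fin by simp
  qed
  define I where "I \<xi> = (CLINT y|F. g \<xi> y)" for \<xi>
  have contI: "continuous_on UNIV I"
  proof (rule continuous_on_sequentiallyI)
    fix u :: "nat \<Rightarrow> 'a" and a :: 'a assume lim: "u \<longlonglongrightarrow> a"
    obtain K where K: "K > 0" "\<And>n. norm (u n) \<le> K"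
      using convergent_imp_Bseq[of u] lim unfolding Bseq_def convergent_def by auto
    define R where "R = max K (norm a)"
    have uR: "\<And>n. norm (u n) \<le> R" unfolding R_def by (metis K(2) max.coboundedI1)
    define C where "C = max (R^2/2) ((2 + R * H) / r^2)"
    show "(\<lambda>n. I (u n)) \<longlonglongrightarrow> I a"
      unfolding I_def
    proof (rule integral_dominated_convergence[where w = "\<lambda>y. C * min 1 ((norm y)\<^sup>2)"])
      show "g a \<in> borel_measurable F" "\<And>n. g (u n) \<in> borel_measurable F" by (rule gm)+
      show "integrable F (\<lambda>y. C * min 1 ((norm y)\<^sup>2))" using wint by simp
      show "AE y in F. (\<lambda>n. g (u n) y) \<longlonglongrightarrow> g a y"
        unfolding g_def by (intro AE_I2 tendsto_intros lim)
      show "AE y in F. norm (g (u n) y) \<le> C * min 1 ((norm y)\<^sup>2)" for n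
        unfolding g_def C_def by (intro AE_I2 levy_integrand_bound[OF r H uR])
    qed
  qed
  have lin: "linear \<sigma>" using cs unfolding covariance_operator_def by auto
  have cs2: "continuous_on UNIV \<sigma>"
    using lin linear_conv_bounded_linear[of \<sigma>] linear_continuous_on by blast
  have eq: "levy_sym h b \<sigma> F = (\<lambda>\<xi>. complex_of_real ((\<xi> \<bullet> \<sigma> \<xi>) / 2) + \<i> * complex_of_real (\<xi> \<bullet> b) - I \<xi>)"
    by (auto simp: levy_sym_def I_def g_def)
  show ?thesis unfolding eq
    by (intro continuous_intros contI cs2) auto
qed



lemma hom_iter_nat:
  fixes G :: "'a::real_vector \<Rightarrow> 'b::real_vector"
  assumes b: "b > 0" and hom: "\<And>u. G (b *\<^sub>R u) = (b powr \<alpha>) *\<^sub>R G u"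
  shows "G ((b^n) *\<^sub>R u) = ((b^n) powr \<alpha>) *\<^sub>R G u"
proof (induction n)
  case 0 then show ?case by simp
next
  case (Suc n)
  have "G ((b^Suc n) *\<^sub>R u) = G (b *\<^sub>R ((b^n) *\<^sub>R u))" by simp
  also have "\<dots> = (b powr \<alpha>) *\<^sub>R G ((b^n) *\<^sub>R u)" by (rule hom)
  also have "\<dots> = (b powr \<alpha>) *\<^sub>R ((b^n) powr \<alpha>) *\<^sub>R G u" using Suc by simp
  also have "\<dots> = ((b^Suc n) powr \<alpha>) *\<^sub>R G u" using b by (simp add: powr_mult)
  finally show ?case .
qed

lemma hom_inv:
  fixes G :: "'a::real_vector \<Rightarrow> 'b::real_vector"
  assumes b: "b > 0" and hom: "\<And>u. G (b *\<^sub>R u) = (b powr \<alpha>) *\<^sub>R G u"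
  shows "G ((1/b) *\<^sub>R u) = ((1/b) powr \<alpha>) *\<^sub>R G u"
proof -
  have "G u = G (b *\<^sub>R ((1/b) *\<^sub>R u))" using b by simp
  also have "\<dots> = (b powr \<alpha>) *\<^sub>R G ((1/b) *\<^sub>R u)" by (rule hom)
  finally have "G u = (b powr \<alpha>) *\<^sub>R G ((1/b) *\<^sub>R u)" .
  then have "((1/b) powr \<alpha>) *\<^sub>R G u = ((1/b) powr \<alpha> * b powr \<alpha>) *\<^sub>R G ((1/b) *\<^sub>R u)" by simp
  also have "(1/b) powr \<alpha> * b powr \<alpha> = 1" using b by (simp add: powr_divide)
  finally show ?thesis by simp
qed

lemma hom_zero:
  fixes G :: "'a::real_vector \<Rightarrow> 'b::real_vector"
  assumes b: "b > 0" "b \<noteq> 1" "\<alpha> \<noteq> 0" and hom: "\<And>u. G (b *\<^sub>R u) = (b powr \<alpha>) *\<^sub>R G u"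
  shows "G 0 = 0"
proof -
  have "G 0 = (b powr \<alpha>) *\<^sub>R G 0" using hom[of 0] by simp
  moreover have "b powr \<alpha> \<noteq> 1" using b by (simp add: powr_eq_one_iff_gen)
  ultimately show ?thesis by (metis scaleR_cancel_right scaleR_one)
qed

lemma hom_decomp:
  fixes G :: "'a::real_normed_vector \<Rightarrow> 'b::real_vector"
  assumes b: "b > 1" and hom: "\<And>u. G (b *\<^sub>R u) = (b powr \<alpha>) *\<^sub>R G u" and u: "u \<noteq> 0"
  shows "\<exists>s>0. s \<le> norm u \<and> norm u \<le> b * s \<and> (\<forall>v. G (s *\<^sub>R v) = (s powr \<alpha>) *\<^sub>R G v)"
proof -
  define k where "k = \<lfloor>log b (norm u)\<rfloor>"
  have nu: "norm u > 0" using u by simp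
  have k1: "of_int k \<le> log b (norm u)" "log b (norm u) < of_int k + 1" unfolding k_def by linarith+
  have s1: "b powr (of_int k) \<le> norm u"
  proof -
    have "b powr (of_int k) \<le> b powr (log b (norm u))" using k1(1) b by (intro powr_mono) auto
    also have "\<dots> = norm u" using b nu by simp
    finally show ?thesis .
  qed
  have s2: "norm u \<le> b * b powr (of_int k)"
  proof -
    have "norm u = b powr (log b (norm u))" using b nu by simp
    also have "\<dots> \<le> b powr (of_int k + 1)" using k1(2) b by (intro powr_mono) auto
    also have "\<dots> = b * b powr (of_int k)" using b by (simp add: powr_add)
    finally show ?thesis .
  qed
  have hs: "\<forall>v. G ((b powr (of_int k)) *\<^sub>R v) = ((b powr (of_int k)) powr \<alpha>) *\<^sub>R G v"
  proof (cases "k \<ge> 0")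
    case True
    then have kk: "(of_int k :: real) = real (nat k)" by simp
    have e1: "b powr real (nat k) = b^nat k" using b by (intro powr_realpow) simp
    then have e: "b powr (of_int k) = b ^ (nat k)" using kk by (simp only:)
    have "b > 0" using b by simp
    show ?thesis unfolding e using hom_iter_nat[where G=G and b=b and \<alpha>=\<alpha>, OF \<open>b > 0\<close> hom] by blast
  next
    case False
    define n where "n = nat (- k)"
    have kk: "(of_int k :: real) = - real n" using False unfolding n_def by simp
    have e1: "b powr (- real n) = 1 / b^n" using b by (simp add: powr_minus_divide powr_realpow)
    then have e: "b powr (of_int k) = 1 / b ^ n" using kk by (simp only:)
    have bn: "b ^ n > 0" using b by simp
    have "b > 0" using b by simp
    have hom2: "\<And>u. G ((b ^ n) *\<^sub>R u) = ((b ^ n) powr \<alpha>) *\<^sub>R G u"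
      using hom_iter_nat[where G=G and b=b and \<alpha>=\<alpha>, OF \<open>b > 0\<close> hom] by blast
    show ?thesis unfolding e using hom_inv[where G=G and b="b^n" and \<alpha>=\<alpha>, OF bn hom2] by blast
  qed
  have "b powr (of_int k) > 0" using b by simp
  then show ?thesis using s1 s2 hs by blast
qed



lemma hom_upper1:
  fixes G :: "'a::euclidean_space \<Rightarrow> 'b::real_normed_vector"
  assumes b: "b > 1" and \<alpha>: "\<alpha> > 0" and hom: "\<And>u. G (b *\<^sub>R u) = (b powr \<alpha>) *\<^sub>R G u"
    and cont: "continuous_on UNIV G"
  shows "\<exists>M\<ge>0. \<forall>u. norm (G u) \<le> M * norm u powr \<alpha>"
proof -
  define K where "K = cball (0::'a) b - ball 0 1"
  have Kc: "compact K" unfolding K_def by (intro compact_diff) auto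
  have Kmem: "v \<in> K \<longleftrightarrow> 1 \<le> norm v \<and> norm v \<le> b" for v
    unfolding K_def by auto
  have "compact (G ` K)" using Kc cont by (intro compact_continuous_image) (auto intro: continuous_on_subset)
  then obtain M0 where M0: "\<And>x. x \<in> G ` K \<Longrightarrow> norm x \<le> M0"
    using compact_imp_bounded[of "G ` K"] unfolding bounded_iff by auto
  define M where "M = max M0 0"
  have MK: "v \<in> K \<Longrightarrow> norm (G v) \<le> M" for v using M0[of "G v"] by (auto simp: M_def)
  have G0: "G 0 = 0" using b \<alpha> by (intro hom_zero[where b=b and \<alpha>=\<alpha>]) (auto simp: hom)
  have "norm (G u) \<le> M * norm u powr \<alpha>" for u
  proof (cases "u = 0")
    case True then show ?thesis using G0 by (simp add: M_def)
  next
    case False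
    from hom_decomp[where G=G and b=b and \<alpha>=\<alpha>, OF b hom False]
    obtain s where s: "s > 0" "s \<le> norm u" "norm u \<le> b * s" and hs: "\<And>v. G (s *\<^sub>R v) = (s powr \<alpha>) *\<^sub>R G v"
      by blast
    define v where "v = (1/s) *\<^sub>R u"
    have uv: "u = s *\<^sub>R v" using s by (simp add: v_def)
    have nv: "norm v = norm u / s" using s by (simp add: v_def)
    have "v \<in> K" unfolding Kmem nv using s by (simp add: field_simps)
    have "norm (G u) = s powr \<alpha> * norm (G v)" using hs uv s by simp
    also have "\<dots> \<le> s powr \<alpha> * M" using MK[OF \<open>v \<in> K\<close>] by (intro mult_left_mono) auto
    also have "\<dots> \<le> norm u powr \<alpha> * M" using s \<alpha> by (intro mult_right_mono powr_mono2) (auto simp: M_def)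
    finally show ?thesis by (simp add: mult.commute)
  qed
  then show ?thesis by (intro exI[of _ M]) (auto simp: M_def)
qed

lemma hom_upper:
  fixes G :: "'a::euclidean_space \<Rightarrow> 'b::real_normed_vector"
  assumes b: "b > 0" "b \<noteq> 1" and \<alpha>: "\<alpha> > 0" and hom: "\<And>u. G (b *\<^sub>R u) = (b powr \<alpha>) *\<^sub>R G u"
    and cont: "continuous_on UNIV G"
  shows "\<exists>M\<ge>0. \<forall>u. norm (G u) \<le> M * norm u powr \<alpha>"
proof (cases "b > 1")
  case True then show ?thesis using hom_upper1[OF True \<alpha> hom cont] by blast
next
  case False
  then have b1: "1/b > 1" using b by (simp add: field_simps)
  have hom': "\<And>u. G ((1/b) *\<^sub>R u) = ((1/b) powr \<alpha>) *\<^sub>R G u"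
    using hom_inv[where G=G and b=b and \<alpha>=\<alpha>, OF b(1) hom] by blast
  show ?thesis using hom_upper1[OF b1 \<alpha> hom' cont] by blast
qed

lemma hom_lower1:
  fixes g :: "'a::euclidean_space \<Rightarrow> real"
  assumes b: "b > 1" and \<alpha>: "\<alpha> > 0" and hom: "\<And>u. g (b *\<^sub>R u) = (b powr \<alpha>) * g u"
    and cont: "continuous_on UNIV g" and pos: "\<And>u. u \<noteq> 0 \<Longrightarrow> g u > 0"
  shows "\<exists>m>0. \<forall>u. g u \<ge> m * norm u powr \<alpha>"
proof -
  define K where "K = cball (0::'a) b - ball 0 1"
  have Kc: "compact K" unfolding K_def by (intro compact_diff) auto
  have Kmem: "v \<in> K \<longleftrightarrow> 1 \<le> norm v \<and> norm v \<le> b" for v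
    unfolding K_def by auto
  obtain e :: 'a where e: "e \<in> Basis" using nonempty_Basis by blast
  have "e \<in> K" unfolding Kmem using e b by simp
  then have "K \<noteq> {}" by auto
  then obtain x0 where x0: "x0 \<in> K" "\<And>y. y \<in> K \<Longrightarrow> g x0 \<le> g y"
    using continuous_attains_inf[OF Kc _ continuous_on_subset[OF cont]] by blast
  have "x0 \<noteq> 0" using x0(1) unfolding Kmem by auto
  then have m0: "g x0 > 0" by (rule pos)
  define m where "m = g x0 / b powr \<alpha>"
  have m: "m > 0" using m0 b by (simp add: m_def)
  have homR: "\<And>u. g (b *\<^sub>R u) = (b powr \<alpha>) *\<^sub>R g u" using hom by simp
  have g0: "g 0 = 0" using b \<alpha> by (intro hom_zero[where b=b and \<alpha>=\<alpha>]) (auto simp: homR)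
  have "g u \<ge> m * norm u powr \<alpha>" for u
  proof (cases "u = 0")
    case True then show ?thesis using g0 by simp
  next
    case False
    from hom_decomp[where G=g and b=b and \<alpha>=\<alpha>, OF b homR False]
    obtain s where s: "s > 0" "s \<le> norm u" "norm u \<le> b * s" and hs: "\<And>v. g (s *\<^sub>R v) = (s powr \<alpha>) *\<^sub>R g v"
      by blast
    define v where "v = (1/s) *\<^sub>R u"
    have uv: "u = s *\<^sub>R v" using s by (simp add: v_def)
    have nv: "norm v = norm u / s" using s by (simp add: v_def)
    have "v \<in> K" unfolding Kmem nv using s by (simp add: field_simps)
    have "m * norm u powr \<alpha> \<le> m * (b * s) powr \<alpha>"
      using s m \<alpha> by (intro mult_left_mono powr_mono2) auto
    also have "\<dots> = g x0 * s powr \<alpha>" using b s by (simp add: m_def powr_mult)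
    also have "\<dots> \<le> g v * s powr \<alpha>" using x0(2)[OF \<open>v \<in> K\<close>] by (intro mult_right_mono) auto
    also have "\<dots> = g u" using hs uv by simp
    finally show ?thesis .
  qed
  then show ?thesis using m by blast
qed

lemma hom_lower:
  fixes g :: "'a::euclidean_space \<Rightarrow> real"
  assumes b: "b > 0" "b \<noteq> 1" and \<alpha>: "\<alpha> > 0" and hom: "\<And>u. g (b *\<^sub>R u) = (b powr \<alpha>) * g u"
    and cont: "continuous_on UNIV g" and pos: "\<And>u. u \<noteq> 0 \<Longrightarrow> g u > 0"
  shows "\<exists>m>0. \<forall>u. g u \<ge> m * norm u powr \<alpha>"
proof (cases "b > 1")
  case True then show ?thesis using hom_lower1[OF True \<alpha> hom cont pos] by blast
next
  case False
  then have b1: "1/b > 1" using b by (simp add: field_simps)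
  have homR: "\<And>u. g (b *\<^sub>R u) = (b powr \<alpha>) *\<^sub>R g u" using hom by simp
  have hom': "\<And>u. g ((1/b) *\<^sub>R u) = ((1/b) powr \<alpha>) * g u"
    using hom_inv[where G=g and b=b and \<alpha>=\<alpha>, OF b(1) homR] by simp
  show ?thesis using hom_lower1[OF b1 \<alpha> hom' cont pos] by blast
qed



lemma unit_AE_const:
  fixes Z :: "'w \<Rightarrow> complex"
  assumes P: "prob_space M" and Zm: "Z \<in> borel_measurable M" and Z1: "\<And>\<omega>. cmod (Z \<omega>) = 1"
    and w1: "cmod (integral\<^sup>L M Z) = 1"
  shows "AE \<omega> in M. Z \<omega> = integral\<^sup>L M Z"
proof -
  interpret prob_space M by (rule P)
  define w where "w = integral\<^sup>L M Z"
  have wn: "cnj w * w = 1" using w1 unfolding w_def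
    by (metis complex_norm_square mult.commute of_real_1 power_one)
  define f where "f \<omega> = 1 - Re (Z \<omega> * cnj w)" for \<omega>
  have fb: "\<And>\<omega>. 0 \<le> f \<omega> \<and> f \<omega> \<le> 2"
  proof -
    fix \<omega>
    have n: "cmod (Z \<omega> * cnj w) = 1" using Z1 w1 by (simp add: norm_mult w_def)
    have "\<bar>Re (Z \<omega> * cnj w)\<bar> \<le> 1" using abs_Re_le_cmod[of "Z \<omega> * cnj w"] n by simp
    then show "0 \<le> f \<omega> \<and> f \<omega> \<le> 2" unfolding f_def by auto
  qed
  have fm: "f \<in> borel_measurable M" unfolding f_def using Zm by measurable
  have Zint: "integrable M Z" using Z1 Zm by (intro integrable_const_bound[where B=1]) auto
  have fint: "integrable M f" using fb fm by (intro integrable_const_bound[where B=2]) auto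
  have "integral\<^sup>L M f = 1 - Re (integral\<^sup>L M (\<lambda>\<omega>. Z \<omega> * cnj w))"
  proof -
    have m2: "(\<lambda>\<omega>. Re (Z \<omega> * cnj w)) \<in> borel_measurable M" using Zm by measurable
    have i2: "integrable M (\<lambda>\<omega>. Re (Z \<omega> * cnj w))" using fb m2
      by (intro integrable_const_bound[where B=1]) (auto simp: f_def abs_le_iff)
    have "integral\<^sup>L M f = integral\<^sup>L M (\<lambda>\<omega>. 1) - integral\<^sup>L M (\<lambda>\<omega>. Re (Z \<omega> * cnj w))"
      unfolding f_def by (rule Bochner_Integration.integral_diff[OF integrable_const i2])
    moreover have e1: "integral\<^sup>L M (\<lambda>\<omega>. 1::real) = 1" by (simp add: prob_space)
    moreover have e2: "integral\<^sup>L M (\<lambda>\<omega>. Re (Z \<omega> * cnj w)) = Re (integral\<^sup>L M (\<lambda>\<omega>. Z \<omega> * cnj w))"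
      by (rule integral_Re) (simp add: Zint)
    ultimately show ?thesis by (simp only:)
  qed
  also have "\<dots> = 1 - Re (w * cnj w)" by (simp add: w_def)
  also have "\<dots> = 0" using wn by (simp add: mult.commute)
  finally have "integral\<^sup>L M f = 0" .
  then have "AE \<omega> in M. f \<omega> = 0" using integral_nonneg_eq_0_iff_AE[OF fint] fb by auto
  then show ?thesis
  proof (rule AE_mp, intro AE_I2 impI)
    fix \<omega> assume "f \<omega> = 0"
    then have re: "Re (Z \<omega> * cnj w) = 1" by (simp add: f_def)
    have n: "cmod (Z \<omega> * cnj w) = 1" using Z1 w1 by (simp add: norm_mult w_def)
    have "(Re (Z \<omega> * cnj w))\<^sup>2 + (Im (Z \<omega> * cnj w))\<^sup>2 = 1"
      using n by (metis cmod_power2 one_power2)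
    then have "Im (Z \<omega> * cnj w) = 0" using re by simp
    then have "Z \<omega> * cnj w = 1" using re by (simp add: complex_eq_iff)
    then have "Z \<omega> * (cnj w * w) = w" by (metis mult.assoc mult_1)
    then have "Z \<omega> = w" using wn by simp
    then show "Z \<omega> = integral\<^sup>L M Z" by (simp add: w_def)
  qed
qed



lemma levy_charf:
  assumes "levy_symbol M L A"
  shows "\<And>t \<xi>. t \<ge> 0 \<Longrightarrow> (CLINT \<omega>|M. exp (\<i> * complex_of_real (\<xi> \<bullet> L t \<omega>)))
                      = exp (- complex_of_real t * A (- \<xi>))"
  using assms unfolding levy_symbol_def by blast

lemma symbol_Re_nonneg:
  assumes lp: "levy_process M L" and ls: "levy_symbol M L A"
  shows "Re (A \<xi>) \<ge> 0"
proof -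
  interpret prob_space M using lp unfolding levy_process_def by auto
  have "cmod (CLINT \<omega>|M. exp (\<i> * complex_of_real ((-\<xi>) \<bullet> L 1 \<omega>)))
      \<le> (\<integral>\<omega>. cmod (exp (\<i> * complex_of_real ((-\<xi>) \<bullet> L 1 \<omega>))) \<partial>M)"
    by (rule integral_norm_bound)
  also have "\<dots> = 1" by (simp add: prob_space)
  finally have "cmod (exp (- complex_of_real 1 * A (- (-\<xi>)))) \<le> 1"
    using levy_charf[OF ls, of 1 "-\<xi>"] by simp
  then have "exp (- Re (A \<xi>)) \<le> 1" by simp
  then show ?thesis by simp
qed


lemma symbol_pos:
  fixes L :: "real \<Rightarrow> 'w \<Rightarrow> 'a::euclidean_space"
  assumes lp: "levy_process M L" and ls: "levy_symbol M L A" and nd: "nondegenerate M L"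
    and ss: "alpha_semi_stable \<alpha> A" and xi: "\<xi> \<noteq> 0"
  shows "Re (A \<xi>) > 0"
proof (rule ccontr)
  assume "\<not> Re (A \<xi>) > 0"
  with symbol_Re_nonneg[OF lp ls, of \<xi>] have Z0: "Re (A \<xi>) = 0" by simp
  interpret prob_space M using lp unfolding levy_process_def by auto
  from ss obtain a b c where a: "a > 0" "a \<noteq> 1" and b: "b > 0" and st: "stab_rel A a b c"
    and ab: "a = b powr \<alpha>"
    unfolding alpha_semi_stable_def semi_stable_def stab_Gamma_def by blast
  have b1: "b \<noteq> 1" using ab a by auto
  have reRel: "Re (A (b *\<^sub>R u)) = a * Re (A u)" for u
  proof -
    have "complex_of_real a * A u = A (b *\<^sub>R u) + \<i> * complex_of_real (c \<bullet> u)"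
      using st unfolding stab_rel_def by blast
    from arg_cong[OF this, of Re] show ?thesis by simp
  qed
  define q where "q = min b (1/b)"
  have q: "0 < q" "q < 1"
  proof -
    show "0 < q" using b by (simp add: q_def)
    show "q < 1"
    proof (cases "b < 1")
      case True then show ?thesis by (simp add: q_def)
    next
      case False then have "b > 1" using b1 by simp
      then have "1/b < 1" by simp
      then show ?thesis by (simp add: q_def)
    qed
  qed
  have qstep: "Re (A (q *\<^sub>R u)) = 0" if "Re (A u) = 0" for u
  proof (cases "b < 1")
    case True
    have "b * b \<le> 1" using True b by (intro mult_le_one) auto
    then have "q = b" using b by (auto simp: q_def min_def field_simps)
    then show ?thesis using reRel[of u] that by simp
  next
    case False
    then have "b > 1" using b1 by simp
    then have "1 * 1 < b * b" by (intro mult_strict_mono) auto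
    then have "q = 1/b" using b by (auto simp: q_def min_def field_simps)
    have "Re (A u) = Re (A (b *\<^sub>R ((1/b) *\<^sub>R u)))" using b by simp
    also have "\<dots> = a * Re (A ((1/b) *\<^sub>R u))" by (rule reRel)
    finally show ?thesis using that a \<open>q = 1/b\<close> by simp
  qed
  have zn: "Re (A ((q^n) *\<^sub>R \<xi>)) = 0" for n
  proof (induction n)
    case 0 then show ?case using Z0 by simp
  next
    case (Suc n)
    have "(q^Suc n) *\<^sub>R \<xi> = q *\<^sub>R ((q^n) *\<^sub>R \<xi>)" by simp
    then show ?case using qstep[OF Suc] by simp
  qed
  obtain t where t: "t > 0" and ntd: "\<not> (\<exists>a c. a \<noteq> 0 \<and> measure_support (distr M borel (L t)) \<subseteq> {x. a \<bullet> x = c})"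
    using nd unfolding nondegenerate_def by blast
  have Lm[measurable]: "L t \<in> borel_measurable M" using lp t unfolding levy_process_def by auto
  define X where "X \<omega> = \<xi> \<bullet> L t \<omega>" for \<omega>
  define Z where "Z n \<omega> = exp (\<i> * complex_of_real ((-((q^n) *\<^sub>R \<xi>)) \<bullet> L t \<omega>))" for n \<omega>
  have Zm: "Z n \<in> borel_measurable M" for n unfolding Z_def by measurable
  have Z1: "cmod (Z n \<omega>) = 1" for n \<omega> unfolding Z_def by simp
  have Zint: "cmod (integral\<^sup>L M (Z n)) = 1" for n
  proof -
    have "integral\<^sup>L M (Z n) = exp (- complex_of_real t * A (- (-((q^n) *\<^sub>R \<xi>))))"
      unfolding Z_def using levy_charf[OF ls, of t "-((q^n) *\<^sub>R \<xi>)"] t by (simp only: less_imp_le)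
    also have "\<dots> = exp (- complex_of_real t * A ((q^n) *\<^sub>R \<xi>))" by simp
    finally show ?thesis using zn[of n] by simp
  qed
  have AEn: "AE \<omega> in M. Z n \<omega> = integral\<^sup>L M (Z n)" for n
    by (rule unit_AE_const[OF prob_space_axioms Zm Z1 Zint])
  then have AEall: "AE \<omega> in M. \<forall>n. Z n \<omega> = integral\<^sup>L M (Z n)"
    by (simp add: AE_all_countable)
  have "\<exists>\<omega>\<in>space M. \<forall>n. Z n \<omega> = integral\<^sup>L M (Z n)"
  proof (rule ccontr)
    assume nex: "\<not> ?thesis"
    have "AE \<omega> in M. False"
      using AEall by (rule AE_mp) (use nex in \<open>auto intro!: AE_I2\<close>)
    then show False using AE_False by simp
  qed
  then obtain \<omega>0 where \<omega>0: "\<omega>0 \<in> space M" "\<And>n. Z n \<omega>0 = integral\<^sup>L M (Z n)" by blast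
  define x0 where "x0 = X \<omega>0"
  have Zexp: "Z n \<omega> = exp (\<i> * complex_of_real (- (q^n) * X \<omega>))" for n \<omega>
    unfolding Z_def X_def by (simp add: inner_minus_left)
  have key: "X \<omega> = x0" if hw: "\<forall>n. Z n \<omega> = integral\<^sup>L M (Z n)" for \<omega>
  proof (rule ccontr)
    assume ne: "X \<omega> \<noteq> x0"
    define \<delta> where "\<delta> = \<bar>X \<omega> - x0\<bar>"
    have d: "\<delta> > 0" using ne by (simp add: \<delta>_def)
    obtain n where n: "q^n < 2*pi/\<delta>" using real_arch_pow_inv[of "2*pi/\<delta>" q] q d by auto
    have "Z n \<omega> = Z n \<omega>0" using hw \<omega>0 by simp
    then have "exp (\<i> * complex_of_real (- (q^n) * X \<omega>)) = exp (\<i> * complex_of_real (- (q^n) * x0))"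
      unfolding Zexp x0_def by simp
    then obtain k :: int where k: "\<i> * complex_of_real (- (q^n) * X \<omega>) = \<i> * complex_of_real (- (q^n) * x0) + (of_int (2 * k) * pi) * \<i>"
      unfolding exp_eq by blast
    from arg_cong[OF k, of Im] have k2: "- (q^n) * X \<omega> = - (q^n) * x0 + 2 * k * pi" by simp
    have e2: "2 * k * pi = q^n * (x0 - X \<omega>)" using k2 by (simp add: algebra_simps)
    have "q^n * \<delta> = \<bar>q^n * (x0 - X \<omega>)\<bar>" unfolding \<delta>_def using q
      by (simp add: abs_mult abs_minus_commute)
    then have "q^n * \<delta> = \<bar>2 * k * pi\<bar>" using e2 by simp
    moreover have "q^n * \<delta> < 2 * pi" using n d by (simp add: field_simps)
    moreover have "q^n * \<delta> > 0" using q d by simp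
    ultimately have "\<bar>k\<bar> < 1" "k \<noteq> 0" by (auto simp: abs_mult)
    then show False by simp
  qed
  have AEX: "AE \<omega> in M. X \<omega> = x0" using AEall by (rule AE_mp) (auto intro!: AE_I2 key)
  have "measure_support (distr M borel (L t)) \<subseteq> {x. \<xi> \<bullet> x = x0}"
  proof
    fix x assume "x \<in> measure_support (distr M borel (L t))"
    then have pos: "\<And>e. e > 0 \<Longrightarrow> emeasure (distr M borel (L t)) (ball x e) > 0"
      by (simp add: measure_support_def)
    show "x \<in> {x. \<xi> \<bullet> x = x0}"
    proof (rule ccontr)
      assume "x \<notin> {x. \<xi> \<bullet> x = x0}"
      then have nx: "\<xi> \<bullet> x \<noteq> x0" by simp
      define e where "e = \<bar>\<xi> \<bullet> x - x0\<bar> / norm \<xi>"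
      have e: "e > 0" using nx xi by (simp add: e_def)
      have ballsub: "\<xi> \<bullet> z \<noteq> x0" if "z \<in> ball x e" for z
      proof
        assume "\<xi> \<bullet> z = x0"
        have "\<bar>\<xi> \<bullet> x - x0\<bar> = \<bar>\<xi> \<bullet> (x - z)\<bar>" using \<open>\<xi> \<bullet> z = x0\<close> by (simp add: inner_diff_right)
        also have "\<dots> \<le> norm \<xi> * norm (x - z)" by (rule Cauchy_Schwarz_ineq2)
        also have "\<dots> < norm \<xi> * e" using that xi by (intro mult_strict_left_mono) (auto simp: dist_norm)
        also have "\<dots> = \<bar>\<xi> \<bullet> x - x0\<bar>" using xi by (simp add: e_def)
        finally show False by simp
      qed
      from AEX obtain N where N: "{\<omega> \<in> space M. \<not> X \<omega> = x0} \<subseteq> N" "emeasure M N = 0" "N \<in> sets M"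
        by (rule AE_E)
      have "emeasure (distr M borel (L t)) (ball x e) = emeasure M (L t -` ball x e \<inter> space M)"
        by (rule emeasure_distr[OF Lm]) simp
      also have "\<dots> \<le> emeasure M N"
      proof (rule emeasure_mono[OF _ N(3)])
        show "L t -` ball x e \<inter> space M \<subseteq> N"
        proof
          fix \<omega> assume "\<omega> \<in> L t -` ball x e \<inter> space M"
          then have "\<omega> \<in> {\<omega> \<in> space M. \<not> X \<omega> = x0}" using ballsub[of "L t \<omega>"] by (auto simp: X_def)
          then show "\<omega> \<in> N" using N(1) by blast
        qed
      qed
      also have "\<dots> = 0" by (rule N(2))
      finally show False using pos[OF e] by simp
    qed
  qed
  then show False using ntd xi by blast
qed



lemma symbol_cont:
  assumes "levy_symbol M L A"
  shows "continuous_on UNIV A"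
  using assms levy_sym_cont unfolding levy_symbol_def by blast

lemma levy_sym_neg:
  fixes h :: "'a::euclidean_space \<Rightarrow> 'a"
  assumes cs: "covariance_operator \<sigma>"
  shows "levy_sym h b \<sigma> F (-\<xi>) = cnj (levy_sym h b \<sigma> F \<xi>)"
proof -
  have lin: "linear \<sigma>" using cs unfolding covariance_operator_def by auto
  have s: "\<sigma> (-\<xi>) = - \<sigma> \<xi>" using lin by (rule linear_neg)
  have f: "(\<lambda>y. exp (- \<i> * complex_of_real ((-\<xi>) \<bullet> y)) - 1 + \<i> * complex_of_real ((-\<xi>) \<bullet> h y))
      = (\<lambda>y. cnj (exp (- \<i> * complex_of_real (\<xi> \<bullet> y)) - 1 + \<i> * complex_of_real (\<xi> \<bullet> h y)))"
    by (auto simp: exp_cnj)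
  have i: "(CLINT y|F. cnj (exp (- \<i> * complex_of_real (\<xi> \<bullet> y)) - 1 + \<i> * complex_of_real (\<xi> \<bullet> h y)))
     = cnj (CLINT y|F. exp (- \<i> * complex_of_real (\<xi> \<bullet> y)) - 1 + \<i> * complex_of_real (\<xi> \<bullet> h y))"
    by (rule Bochner_Integration.integral_cnj)
  show ?thesis unfolding levy_sym_def f s i by simp
qed

lemma symbol_neg:
  assumes "levy_symbol M L A"
  shows "A (-\<xi>) = cnj (A \<xi>)"
  using assms levy_sym_neg unfolding levy_symbol_def by metis

lemma stab_inv:
  assumes st: "stab_rel A a b c" and a: "a > 0" and b: "b > 0"
  shows "stab_rel A (1/a) (1/b) (- (1/(a*b)) *\<^sub>R c)"
  unfolding stab_rel_def
proof
  fix u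
  have "complex_of_real a * A ((1/b) *\<^sub>R u) = A (b *\<^sub>R ((1/b) *\<^sub>R u)) + \<i> * complex_of_real (c \<bullet> ((1/b) *\<^sub>R u))"
    using st unfolding stab_rel_def by blast
  also have "b *\<^sub>R ((1/b) *\<^sub>R u) = u" using b by simp
  finally have e: "complex_of_real a * A ((1/b) *\<^sub>R u) = A u + \<i> * complex_of_real ((c \<bullet> u) / b)" by simp
  have "complex_of_real (1/a) * A u = complex_of_real (1/a) * (complex_of_real a * A ((1/b) *\<^sub>R u) - \<i> * complex_of_real ((c \<bullet> u) / b))"
    using e by simp
  also have "\<dots> = A ((1/b) *\<^sub>R u) - \<i> * complex_of_real ((c \<bullet> u) / (a * b))"
    using a by (simp add: field_simps)
  also have "\<dots> = A ((1/b) *\<^sub>R u) + \<i> * complex_of_real ((- (1/(a*b)) *\<^sub>R c) \<bullet> u)"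
    by (simp add: field_simps)
  finally show "complex_of_real (1/a) * A u = A ((1/b) *\<^sub>R u) + \<i> * complex_of_real ((- (1/(a*b)) *\<^sub>R c) \<bullet> u)" .
qed



lemma B_hom:
  fixes A :: "'a::euclidean_space \<Rightarrow> complex"
  assumes st: "stab_rel A a b c" and ab: "a = b powr \<alpha>" and ne: "a \<noteq> b"
  defines "d \<equiv> (1/(b-a)) *\<^sub>R c"
  shows "\<And>u. A (b *\<^sub>R u) + \<i> * complex_of_real (d \<bullet> (b *\<^sub>R u))
         = (b powr \<alpha>) *\<^sub>R (A u + \<i> * complex_of_real (d \<bullet> u))"
proof -
  fix u
  have e: "complex_of_real a * A u = A (b *\<^sub>R u) + \<i> * complex_of_real (c \<bullet> u)"
    using st unfolding stab_rel_def by blast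
  have bd: "b * (d \<bullet> u) = a * (d \<bullet> u) + c \<bullet> u"
  proof -
    have "(b - a) * (d \<bullet> u) = c \<bullet> u" using ne unfolding d_def by simp
    then show ?thesis by (simp add: algebra_simps)
  qed
  have "A (b *\<^sub>R u) + \<i> * complex_of_real (d \<bullet> (b *\<^sub>R u))
      = complex_of_real a * A u - \<i> * complex_of_real (c \<bullet> u) + \<i> * complex_of_real (b * (d \<bullet> u))"
    using e by (simp add: algebra_simps)
  also have "\<dots> = complex_of_real a * (A u + \<i> * complex_of_real (d \<bullet> u))"
    unfolding bd by (simp add: algebra_simps)
  also have "\<dots> = (b powr \<alpha>) *\<^sub>R (A u + \<i> * complex_of_real (d \<bullet> u))"
    using ab by (simp add: scaleR_conv_of_real)
  finally show "A (b *\<^sub>R u) + \<i> * complex_of_real (d \<bullet> (b *\<^sub>R u))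
         = (b powr \<alpha>) *\<^sub>R (A u + \<i> * complex_of_real (d \<bullet> u))" .
qed

lemma sob_assemble:
  fixes A :: "'a::euclidean_space \<Rightarrow> complex"
  assumes \<alpha>: "0 < \<alpha>" "\<alpha> \<le> 2" and m: "m > 0" "\<And>u. Re (A u) \<ge> m * norm u powr \<alpha>"
    and M: "M \<ge> 0" "D \<ge> 0" "\<And>u. cmod (A u) \<le> M * norm u powr \<alpha> + D * norm u"
    and D: "D = 0 \<or> \<alpha> \<ge> 1"
  shows "sobolev_index \<alpha> A"
proof -
  have p1: "norm u powr \<alpha> \<le> (1 + (norm u)\<^sup>2) powr (\<alpha> / 2)" for u :: 'a
  proof -
    have "norm u powr \<alpha> = ((norm u)\<^sup>2) powr (\<alpha> / 2)"
      by (simp add: powr_powr[symmetric] powr_realpow[symmetric] flip: powr_numeral)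
        (metis norm_ge_zero powr_powr times_divide_eq_right nonzero_mult_div_cancel_left zero_neq_numeral
           powr_numeral)
    also have "\<dots> \<le> (1 + (norm u)\<^sup>2) powr (\<alpha> / 2)" using \<alpha> by (intro powr_mono2) auto
    finally show ?thesis .
  qed
  have p2: "D * norm u \<le> D * (1 + (norm u)\<^sup>2) powr (\<alpha> / 2)" for u :: 'a
  proof (cases "D = 0")
    case True then show ?thesis by simp
  next
    case False
    then have a1: "\<alpha> \<ge> 1" using D by simp
    have "norm u = sqrt ((norm u)\<^sup>2)" by simp
    also have "\<dots> \<le> sqrt (1 + (norm u)\<^sup>2)" by (rule real_sqrt_le_mono) simp
    also have "\<dots> = (1 + (norm u)\<^sup>2) powr (1/2)" by (simp add: powr_half_sqrt)
    also have "\<dots> \<le> (1 + (norm u)\<^sup>2) powr (\<alpha> / 2)" using a1 by (intro powr_mono) auto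
    finally show ?thesis using M(2) by (intro mult_left_mono) auto
  qed
  have bnd: "\<forall>u. cmod (A u) \<le> (M + D) * (1 + (norm u)\<^sup>2) powr (\<alpha> / 2) \<and>
      Re (A u) \<ge> m * norm u powr \<alpha> - 0 * (1 + (norm u)\<^sup>2) powr (0 / 2)"
  proof
    fix u :: 'a
    have "cmod (A u) \<le> M * norm u powr \<alpha> + D * norm u" by (rule M(3))
    also have "\<dots> \<le> M * (1 + (norm u)\<^sup>2) powr (\<alpha> / 2) + D * (1 + (norm u)\<^sup>2) powr (\<alpha> / 2)"
      by (rule add_mono[OF mult_left_mono[OF p1[of u] M(1)] p2[of u]])
    finally have "cmod (A u) \<le> (M + D) * (1 + (norm u)\<^sup>2) powr (\<alpha> / 2)" by (simp add: algebra_simps)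
    moreover have "m * norm u powr \<alpha> - 0 * (1 + (norm u)\<^sup>2) powr (0 / 2) \<le> Re (A u)" using m by simp
    ultimately show "cmod (A u) \<le> (M + D) * (1 + (norm u)\<^sup>2) powr (\<alpha> / 2) \<and>
      Re (A u) \<ge> m * norm u powr \<alpha> - 0 * (1 + (norm u)\<^sup>2) powr (0 / 2)" by simp
  qed
  have "M + D \<ge> 0" "(0::real) \<le> 0" using M by auto
  then show ?thesis unfolding sobolev_index_def using \<alpha> m(1) bnd by blast
qed



lemma sq_powr: "x \<ge> 0 \<Longrightarrow> (x\<^sup>2) powr (\<alpha>/2) = x powr (\<alpha>::real)"
  for x :: real
proof -
  assume x: "x \<ge> 0"
  have "x\<^sup>2 = x powr 2" using x by (cases "x = 0") (simp_all add: powr_numeral)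
  then have "(x\<^sup>2) powr (\<alpha>/2) = x powr (2 * (\<alpha>/2))" by (simp add: powr_powr)
  then show ?thesis by simp
qed

lemma c_zero1:
  fixes A :: "'a::euclidean_space \<Rightarrow> complex"
  assumes b: "b > 1" and \<alpha>: "0 < \<alpha>" "\<alpha> < 1" and st: "stab_rel A a b c" and ab: "a = b powr \<alpha>"
    and C1: "C1 \<ge> 0" "\<And>u. cmod (A u) \<le> C1 * (1 + (norm u)\<^sup>2) powr (\<alpha>/2)"
  shows "c = 0"
proof (rule ccontr)
  assume c: "c \<noteq> 0"
  have "b powr \<alpha> < b powr 1" using b \<alpha> by (intro powr_less_mono) auto
  then have ab2: "a < b" using ab b by simp
  then have ne: "a \<noteq> b" by simp
  define d where "d = (1/(b-a)) *\<^sub>R c"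
  define B where "B u = A u + \<i> * complex_of_real (d \<bullet> u)" for u
  have Bhom: "B (b *\<^sub>R u) = (b powr \<alpha>) *\<^sub>R B u" for u
    unfolding B_def d_def by (rule B_hom[OF st ab ne])
  have dn: "d \<noteq> 0" using c ab2 by (simp add: d_def)
  define nd where "nd = (norm d)\<^sup>2"
  have nd: "nd > 0" using dn by (simp add: nd_def)
  define K where "K = norm (B d) + C1 * (1 + nd) powr (\<alpha>/2)"
  have K: "K \<ge> 0" using C1 by (simp add: K_def)
  have bound: "x * nd \<le> K * x powr \<alpha>" if x: "x = b^n" for n x
  proof -
    have x1: "x \<ge> 1" using x b by simp
    have Bx: "B (x *\<^sub>R d) = (x powr \<alpha>) *\<^sub>R B d"
      unfolding x by (rule hom_iter_nat[where G=B, OF _ Bhom]) (use b in simp)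
    have "A (x *\<^sub>R d) = B (x *\<^sub>R d) - \<i> * complex_of_real (x * nd)"
      by (simp add: B_def nd_def power2_norm_eq_inner)
    then have "\<i> * complex_of_real (x * nd) = B (x *\<^sub>R d) - A (x *\<^sub>R d)" by simp
    then have "x * nd = cmod (B (x *\<^sub>R d) - A (x *\<^sub>R d))"
      using x1 nd by (metis abs_of_nonneg mult_nonneg_nonneg norm_ii norm_mult norm_of_real
          less_imp_le mult_1 order_trans zero_le_one)
    also have "\<dots> \<le> cmod (B (x *\<^sub>R d)) + cmod (A (x *\<^sub>R d))" by (rule norm_triangle_ineq4)
    also have "cmod (B (x *\<^sub>R d)) = x powr \<alpha> * norm (B d)" using Bx by simp
    also have "cmod (A (x *\<^sub>R d)) \<le> C1 * (x powr \<alpha> * (1 + nd) powr (\<alpha>/2))"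
    proof -
      have "cmod (A (x *\<^sub>R d)) \<le> C1 * (1 + (norm (x *\<^sub>R d))\<^sup>2) powr (\<alpha>/2)" by (rule C1(2))
      also have "(norm (x *\<^sub>R d))\<^sup>2 = x\<^sup>2 * nd" using x1 by (simp add: nd_def power_mult_distrib)
      also have "(1 + x\<^sup>2 * nd) powr (\<alpha>/2) \<le> (x\<^sup>2 * (1 + nd)) powr (\<alpha>/2)"
      proof (intro powr_mono2)
        have "1 \<le> x\<^sup>2" using x1 by simp
        then show "1 + x\<^sup>2 * nd \<le> x\<^sup>2 * (1 + nd)" by (simp add: algebra_simps)
      qed (use \<alpha> nd in auto)
      also have "(x\<^sup>2 * (1 + nd)) powr (\<alpha>/2) = x powr \<alpha> * (1 + nd) powr (\<alpha>/2)"
        using x1 nd by (simp add: powr_mult sq_powr)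
      finally show ?thesis using C1(1) by (simp add: mult_left_mono)
    qed
    finally show ?thesis by (simp add: K_def algebra_simps)
  qed
  define T where "T = (K / nd + 1) powr (1/(1-\<alpha>))"
  obtain n where n: "T < b^n" using real_arch_pow[OF b] by blast
  define x where "x = b^n"
  have x1: "x \<ge> 1" using b by (simp add: x_def)
  have T0: "T \<ge> 0" by (simp add: T_def)
  have "T powr (1-\<alpha>) < x powr (1-\<alpha>)" using n T0 \<alpha> by (intro powr_less_mono2) (auto simp: x_def)
  moreover have "T powr (1-\<alpha>) = K / nd + 1" unfolding T_def using \<alpha> nd K by (simp add: powr_powr)
  ultimately have gt: "K / nd + 1 < x powr (1-\<alpha>)" by simp
  have "x = x powr \<alpha> * x powr (1-\<alpha>)" using x1 by (simp add: powr_add[symmetric])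
  then have "x * nd = x powr \<alpha> * (x powr (1-\<alpha>) * nd)" by simp
  also have "\<dots> > x powr \<alpha> * ((K / nd + 1) * nd)"
    using gt nd x1 by (intro mult_strict_left_mono mult_strict_right_mono) auto
  also have "x powr \<alpha> * ((K / nd + 1) * nd) = x powr \<alpha> * (K + nd)" using nd by (simp add: field_simps)
  finally have "x * nd > K * x powr \<alpha>" using nd x1 by (smt (verit) mult.commute mult_left_mono powr_ge_zero)
  then show False using bound[OF x_def] by simp
qed



lemma stab_iter_1d:
  fixes A :: "real \<Rightarrow> complex"
  assumes st: "stab_rel A a a c" and a: "a > 0"
  shows "complex_of_real (a^n) * A u = A (a^n * u) + \<i> * complex_of_real (real n * a^n / a * c * u)"
proof (induction n arbitrary: u)
  case 0 then show ?case by simp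
next
  case (Suc n)
  have e: "complex_of_real a * A v = A (a * v) + \<i> * complex_of_real (c * v)" for v
    using st unfolding stab_rel_def by simp
  have "complex_of_real (a^Suc n) * A u = complex_of_real a * (complex_of_real (a^n) * A u)" by simp
  also have "\<dots> = complex_of_real a * A (a^n * u) + \<i> * complex_of_real (a * (real n * a^n / a * c * u))"
    using Suc by (simp add: algebra_simps)
  also have "\<dots> = A (a^Suc n * u) + \<i> * complex_of_real (c * (a^n * u) + a * (real n * a^n / a * c * u))"
    using e[of "a^n * u"] by (simp add: algebra_simps)
  also have "c * (a^n * u) + a * (real n * a^n / a * c * u) = real (Suc n) * a^Suc n / a * c * u"
    using a by (simp add: field_simps)
  finally show ?case .
qed

lemma c_zero_1d1:
  fixes A :: "real \<Rightarrow> complex"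
  assumes a: "a > 1" and st: "stab_rel A a a c" and C1: "C1 \<ge> 0"
    and bnd: "\<And>u. cmod (A u) \<le> C1 * (1 + u\<^sup>2) powr (1/2)"
  shows "c = 0"
proof (rule ccontr)
  assume c: "c \<noteq> 0"
  define R where "R = \<bar>Im (A 1)\<bar> + 2 * C1"
  have key: "real n * \<bar>c\<bar> / a \<le> R" for n
  proof -
    define x where "x = a^n"
    have x1: "x \<ge> 1" using a by (simp add: x_def)
    have it: "complex_of_real x * A 1 = A x + \<i> * complex_of_real (real n * x / a * c)"
      using stab_iter_1d[OF st, of n 1] a by (simp add: x_def)
    from arg_cong[OF it, of Im] have im: "x * Im (A 1) = Im (A x) + real n * x / a * c" by simp
    have sq: "(1 + x\<^sup>2) powr (1/2) \<le> 2 * x"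
    proof -
      have "1 * 1 \<le> x * x" by (rule mult_mono) (use x1 in auto)
      then have xx: "1 \<le> x * x" by simp
      have "(1 + x\<^sup>2) powr (1/2) = sqrt (1 + x\<^sup>2)" by (simp add: powr_half_sqrt)
      also have "\<dots> \<le> sqrt ((2 * x)\<^sup>2)" using xx by (intro real_sqrt_le_mono) (simp add: power2_eq_square)
      also have "\<dots> = 2 * x" using x1 by (subst real_sqrt_abs) simp
      finally show ?thesis .
    qed
    have "\<bar>Im (A x)\<bar> \<le> cmod (A x)" by (rule abs_Im_le_cmod)
    also have "\<dots> \<le> C1 * (1 + x\<^sup>2) powr (1/2)" by (rule bnd)
    also have "\<dots> \<le> C1 * (2 * x)" using C1 sq by (rule mult_left_mono[rotated])
    finally have imb: "\<bar>Im (A x)\<bar> \<le> 2 * C1 * x" by simp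
    have e1: "real n * x / a * c = x * Im (A 1) - Im (A x)" using im by simp
    have "\<bar>x * Im (A 1) - Im (A x)\<bar> \<le> \<bar>x * Im (A 1)\<bar> + \<bar>Im (A x)\<bar>" by (rule abs_triangle_ineq4)
    also have "\<bar>x * Im (A 1)\<bar> = x * \<bar>Im (A 1)\<bar>" using x1 by (simp add: abs_mult)
    finally have "\<bar>real n * x / a * c\<bar> \<le> x * R" using imb unfolding e1 R_def by (simp add: algebra_simps)
    moreover have "\<bar>real n * x / a * c\<bar> = x * (real n * \<bar>c\<bar> / a)" using x1 a by (simp add: abs_mult)
    ultimately have "x * (real n * \<bar>c\<bar> / a) \<le> x * R" by simp
    moreover have "x > 0" using x1 by simp
    ultimately show ?thesis using mult_le_cancel_left_pos by blast
  qed
  obtain n :: nat where n: "R * a / \<bar>c\<bar> < real n" using reals_Archimedean2 by blast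
  have "R * a / \<bar>c\<bar> * \<bar>c\<bar> / a < real n * \<bar>c\<bar> / a" using n c a
    by (intro divide_strict_right_mono mult_strict_right_mono) auto
  then have "R < real n * \<bar>c\<bar> / a" using c a by simp
  then show False using key[of n] by simp
qed

lemma c_zero_1d:
  fixes A :: "real \<Rightarrow> complex"
  assumes a: "a > 0" "a \<noteq> 1" and st: "stab_rel A a a c" and C1: "C1 \<ge> 0"
    and bnd: "\<And>u. cmod (A u) \<le> C1 * (1 + u\<^sup>2) powr (1/2)"
  shows "c = 0"
proof (cases "a > 1")
  case True then show ?thesis using c_zero_1d1[OF True st C1 bnd] by simp
next
  case False
  then have a1: "1/a > 1" using a by (simp add: field_simps)
  have "stab_rel A (1/a) (1/a) (- (1/(a*a)) *\<^sub>R c)" by (rule stab_inv[OF st a(1) a(1)])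
  from c_zero_1d1[OF a1 this C1 bnd] show ?thesis using a by simp
qed

lemma form_1d:
  fixes A :: "real \<Rightarrow> complex"
  assumes hom: "\<And>a u. a > 0 \<Longrightarrow> A (a * u) = complex_of_real a * A u"
    and neg: "\<And>u. A (-u) = cnj (A u)"
  shows "A u = complex_of_real (Re (A 1) * \<bar>u\<bar>) + \<i> * complex_of_real (Im (A 1) * u)"
proof -
  have z: "A 0 = 0" using hom[of 2 0] by simp
  consider "u > 0" | "u = 0" | "u < 0" by linarith
  then show ?thesis
  proof cases
    case 1
    then have "A u = complex_of_real u * A 1" using hom[of u 1] by simp
    then show ?thesis using 1 by (simp add: complex_eq_iff)
  next
    case 2 then show ?thesis using z by simp
  next
    case 3
    then have "A u = complex_of_real (-u) * A (-1)" using hom[of "-u" "-1"] by simp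
    then have "A u = complex_of_real (-u) * cnj (A 1)" using neg[of 1] by simp
    then show ?thesis using 3 by (simp add: complex_eq_iff)
  qed
qed



lemma sob_from_triple:
  fixes L :: "real \<Rightarrow> 'w \<Rightarrow> 'a::euclidean_space"
  assumes lp: "levy_process M L" and ls: "levy_symbol M L A" and nd: "nondegenerate M L"
    and ss: "alpha_semi_stable \<alpha> A" and \<alpha>: "0 < \<alpha>" "\<alpha> \<le> 2"
    and st: "stab_rel A a b c" and a: "a > 0" "a \<noteq> 1" and b: "b > 0" and ab: "a = b powr \<alpha>"
    and ne: "a \<noteq> b" and cD: "c = 0 \<or> \<alpha> \<ge> 1"
  shows "sobolev_index \<alpha> A"
proof -
  have b1: "b \<noteq> 1" using ab a by auto
  have cont: "continuous_on UNIV A" by (rule symbol_cont[OF ls])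
  have contRe: "continuous_on UNIV (\<lambda>u. Re (A u))" by (intro continuous_intros cont)
  have reRel: "Re (A (b *\<^sub>R u)) = (b powr \<alpha>) * Re (A u)" for u
  proof -
    have "complex_of_real a * A u = A (b *\<^sub>R u) + \<i> * complex_of_real (c \<bullet> u)"
      using st unfolding stab_rel_def by blast
    from arg_cong[OF this, of Re] show ?thesis using ab by simp
  qed
  obtain m where m: "m > 0" "\<And>u. Re (A u) \<ge> m * norm u powr \<alpha>"
    using hom_lower[OF b b1 \<alpha>(1) reRel contRe symbol_pos[OF lp ls nd ss]] by blast
  define d where "d = (1/(b-a)) *\<^sub>R c"
  define B where "B u = A u + \<i> * complex_of_real (d \<bullet> u)" for u
  have Bhom: "B (b *\<^sub>R u) = (b powr \<alpha>) *\<^sub>R B u" for u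
    unfolding B_def d_def by (rule B_hom[OF st ab ne])
  have contB: "continuous_on UNIV B" unfolding B_def by (intro continuous_intros cont)
  obtain MB where MB: "MB \<ge> 0" "\<And>u. norm (B u) \<le> MB * norm u powr \<alpha>"
    using hom_upper[OF b b1 \<alpha>(1) Bhom contB] by blast
  have up: "cmod (A u) \<le> MB * norm u powr \<alpha> + norm d * norm u" for u
  proof -
    have "A u = B u - \<i> * complex_of_real (d \<bullet> u)" by (simp add: B_def)
    then have "cmod (A u) \<le> cmod (B u) + cmod (\<i> * complex_of_real (d \<bullet> u))"
      by (metis norm_triangle_ineq4)
    also have "cmod (\<i> * complex_of_real (d \<bullet> u)) = \<bar>d \<bullet> u\<bar>" by (simp add: norm_mult)
    also have "\<bar>d \<bullet> u\<bar> \<le> norm d * norm u" by (rule Cauchy_Schwarz_ineq2)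
    finally show ?thesis using MB(2)[of u] by simp
  qed
  have "norm d = 0 \<or> \<alpha> \<ge> 1" using cD by (auto simp: d_def)
  then show ?thesis using sob_assemble[OF \<alpha> m MB(1) norm_ge_zero up] by blast
qed



lemma c_zero:
  fixes A :: "'a::euclidean_space \<Rightarrow> complex"
  assumes b: "b > 0" "b \<noteq> 1" and \<alpha>: "0 < \<alpha>" "\<alpha> < 1" and st: "stab_rel A a b c" and a: "a > 0"
    and ab: "a = b powr \<alpha>"
    and C1: "C1 \<ge> 0" "\<And>u. cmod (A u) \<le> C1 * (1 + (norm u)\<^sup>2) powr (\<alpha>/2)"
  shows "c = 0"
proof (cases "b > 1")
  case True then show ?thesis by (rule c_zero1[OF _ \<alpha> st ab C1])
next
  case False
  then have b1: "1/b > 1" using b by (simp add: field_simps)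
  have st': "stab_rel A (1/a) (1/b) (- (1/(a*b)) *\<^sub>R c)" by (rule stab_inv[OF st a b(1)])
  have ab': "1/a = (1/b) powr \<alpha>" using ab b by (simp add: powr_divide)
  from c_zero1[OF b1 \<alpha> st' ab' C1] show ?thesis using a b by simp
qed

lemma part_a1:
  fixes A :: "'a::euclidean_space \<Rightarrow> complex"
  assumes ss: "alpha_semi_stable \<alpha> A" and \<alpha>: "0 < \<alpha>" "\<alpha> < 1" and sob: "sobolev_index \<alpha> A"
  shows "strictly_alpha_semi_stable \<alpha> A"
proof -
  obtain C1 where C1: "C1 \<ge> 0" "\<And>u. cmod (A u) \<le> C1 * (1 + (norm u)\<^sup>2) powr (\<alpha>/2)"
    using sob unfolding sobolev_index_def by blast
  from ss obtain a b c where a: "a > 0" "a \<noteq> 1" and b: "b > 0" and st: "stab_rel A a b c"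
    and ab: "a = b powr \<alpha>"
    unfolding alpha_semi_stable_def semi_stable_def stab_Gamma_def by blast
  have b1: "b \<noteq> 1" using ab a by auto
  have "c = 0" by (rule c_zero[OF b b1 \<alpha> st a(1) ab C1])
  then show ?thesis using ss a b st
    unfolding strictly_alpha_semi_stable_def strictly_semi_stable_def by blast
qed

lemma strict1_hom:
  fixes A :: "real \<Rightarrow> complex"
  assumes s: "strictly_alpha_stable 1 A" and a: "a > 0"
  shows "A (a * u) = complex_of_real a * A u"
proof (cases "a = 1")
  case True then show ?thesis by simp
next
  case False
  from s a False obtain b where b: "b > 0" "stab_rel A a b 0"
    unfolding strictly_alpha_stable_def strictly_stable_def by blast
  then have "a = b" using s a unfolding strictly_alpha_stable_def alpha_stable_def by auto
  then show ?thesis using b unfolding stab_rel_def by simp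
qed

lemma strict1_form:
  fixes L :: "real \<Rightarrow> 'w \<Rightarrow> real" and A :: "real \<Rightarrow> complex"
  assumes lp: "levy_process M L" and ls: "levy_symbol M L A" and nd: "nondegenerate M L"
    and ss: "alpha_semi_stable 1 A" and s: "strictly_alpha_stable 1 A"
  shows "\<exists>c>0. \<exists>\<tau>::real. \<forall>u. A u = complex_of_real (c * \<bar>u\<bar>) + \<i> * complex_of_real (\<tau> * u)"
proof -
  have "Re (A 1) > 0" using symbol_pos[OF lp ls nd ss, of 1] by simp
  moreover have "\<forall>u. A u = complex_of_real (Re (A 1) * \<bar>u\<bar>) + \<i> * complex_of_real (Im (A 1) * u)"
    using form_1d[of A] strict1_hom[OF s] symbol_neg[OF ls] by blast
  ultimately show ?thesis by blast
qed

lemma part_d1: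
  fixes A :: "real \<Rightarrow> complex"
  assumes as: "alpha_stable 1 A" and sob: "sobolev_index 1 A"
  shows "strictly_alpha_stable 1 A"
proof -
  obtain C1 where C1: "C1 \<ge> 0" "\<And>u. cmod (A u) \<le> C1 * (1 + (norm u)\<^sup>2) powr (1/2)"
    using sob unfolding sobolev_index_def by auto
  have C1': "\<And>u. cmod (A u) \<le> C1 * (1 + u\<^sup>2) powr (1/2)" using C1(2) by simp
  have "\<exists>b>0. stab_rel A a b 0" if a: "0 < a" "a \<noteq> 1" for a
  proof -
    from as a obtain b c where b: "b > 0" and st: "stab_rel A a b c"
      unfolding alpha_stable_def stable_def stab_Gamma_def by blast
    have "a = b" using as a b st unfolding alpha_stable_def by auto
    with st have st': "stab_rel A a a c" by simp
    have "c = 0" by (rule c_zero_1d[OF a st' C1(1) C1'])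
    then show ?thesis using st' a by blast
  qed
  then show ?thesis using as unfolding strictly_alpha_stable_def strictly_stable_def by blast
qed

lemma part_d2:
  fixes L :: "real \<Rightarrow> 'w \<Rightarrow> real" and A :: "real \<Rightarrow> complex"
  assumes lp: "levy_process M L" and ls: "levy_symbol M L A" and nd: "nondegenerate M L"
    and ss: "alpha_semi_stable 1 A" and s: "strictly_alpha_stable 1 A"
  shows "sobolev_index 1 A"
proof -
  obtain c \<tau> where c: "c > 0" and f: "\<And>u. A u = complex_of_real (c * \<bar>u\<bar>) + \<i> * complex_of_real (\<tau> * u)"
    using strict1_form[OF lp ls nd ss s] by blast
  have lo: "Re (A u) \<ge> c * norm u powr 1" for u using f[of u] by simp
  have up: "cmod (A u) \<le> (c + \<bar>\<tau>\<bar>) * norm u powr 1 + 0 * norm u" for u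
  proof -
    have "cmod (A u) \<le> cmod (complex_of_real (c * \<bar>u\<bar>)) + cmod (\<i> * complex_of_real (\<tau> * u))"
      unfolding f by (rule norm_triangle_ineq)
    also have "\<dots> = (c + \<bar>\<tau>\<bar>) * \<bar>u\<bar>" using c by (simp add: norm_mult abs_mult algebra_simps)
    finally show ?thesis by simp
  qed
  have cm: "c + \<bar>\<tau>\<bar> \<ge> 0" using c by simp
  show ?thesis by (rule sob_assemble[OF _ _ c lo cm _ up]) auto
qed



theorem mainTheorem8:
  fixes M :: "'w measure" and L :: "real \<Rightarrow> 'w \<Rightarrow> 'a::euclidean_space"
    and A :: "'a \<Rightarrow> complex" and \<alpha> :: real
    and M' :: "'v measure" and L' :: "real \<Rightarrow> 'v \<Rightarrow> real" and A' :: "real \<Rightarrow> complex"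
  assumes "levy_process M L" and "levy_symbol M L A" and "nondegenerate M L"
    and "alpha_semi_stable \<alpha> A"
  shows "(0 < \<alpha> \<and> \<alpha> < 1 \<longrightarrow> (sobolev_index \<alpha> A \<longleftrightarrow> strictly_alpha_semi_stable \<alpha> A))
     \<and> (1 < \<alpha> \<and> \<alpha> \<le> 2 \<longrightarrow> sobolev_index \<alpha> A)
     \<and> (levy_process M' L' \<and> levy_symbol M' L' A' \<and> nondegenerate M' L' \<and>
         alpha_semi_stable 1 A' \<and> strictly_alpha_stable 1 A' \<and> sobolev_index 1 A' \<longrightarrow>
         (\<exists>c>0. \<exists>\<tau>::real. \<forall>u. A' u = complex_of_real (c * \<bar>u\<bar>) + \<i> * complex_of_real (\<tau> * u)))
     \<and> (levy_process M' L' \<and> levy_symbol M' L' A' \<and> nondegenerate M' L' \<and>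
         alpha_semi_stable 1 A' \<and> alpha_stable 1 A' \<longrightarrow>
         (sobolev_index 1 A' \<longleftrightarrow> strictly_alpha_stable 1 A'))"
proof -
  note lp = assms(1) and ls = assms(2) and nd = assms(3) and ss = assms(4)
  have pa: "0 < \<alpha> \<and> \<alpha> < 1 \<longrightarrow> (sobolev_index \<alpha> A \<longleftrightarrow> strictly_alpha_semi_stable \<alpha> A)"
  proof (intro impI iffI)
    assume \<alpha>: "0 < \<alpha> \<and> \<alpha> < 1"
    {
      assume "sobolev_index \<alpha> A"
      then show "strictly_alpha_semi_stable \<alpha> A" using part_a1[OF ss] \<alpha> by blast
    }
    {
      assume "strictly_alpha_semi_stable \<alpha> A"
      then obtain a b where a: "a > 0" "a \<noteq> 1" and b: "b > 0" and st: "stab_rel A a b 0"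
        unfolding strictly_alpha_semi_stable_def strictly_semi_stable_def by blast
      have ab: "a = b powr \<alpha>" using ss a b st unfolding alpha_semi_stable_def by blast
      have b1: "b \<noteq> 1" using ab a by auto
      have ne: "a \<noteq> b"
      proof
        assume "a = b"
        then have "b powr \<alpha> = b powr 1" using ab b by simp
        then have "\<alpha> = 1" using b b1 powr_inj by blast
        then show False using \<alpha> by simp
      qed
      show "sobolev_index \<alpha> A"
        by (rule sob_from_triple[OF lp ls nd ss _ _ st a b ab ne]) (use \<alpha> in auto)
    }
  qed
  have pb: "1 < \<alpha> \<and> \<alpha> \<le> 2 \<longrightarrow> sobolev_index \<alpha> A"
  proof
    assume \<alpha>: "1 < \<alpha> \<and> \<alpha> \<le> 2"
    from ss obtain a b c where a: "a > 0" "a \<noteq> 1" and b: "b > 0" and st: "stab_rel A a b c"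
      and ab: "a = b powr \<alpha>"
      unfolding alpha_semi_stable_def semi_stable_def stab_Gamma_def by blast
    have b1: "b \<noteq> 1" using ab a by auto
    have ne: "a \<noteq> b"
    proof
      assume "a = b"
      then have "b powr \<alpha> = b powr 1" using ab b by simp
      then have "\<alpha> = 1" using b b1 powr_inj by blast
      then show False using \<alpha> by simp
    qed
    show "sobolev_index \<alpha> A"
      by (rule sob_from_triple[OF lp ls nd ss _ _ st a b ab ne]) (use \<alpha> in auto)
  qed
  have pc: "levy_process M' L' \<and> levy_symbol M' L' A' \<and> nondegenerate M' L' \<and>
         alpha_semi_stable 1 A' \<and> strictly_alpha_stable 1 A' \<and> sobolev_index 1 A' \<longrightarrow>
         (\<exists>c>0. \<exists>\<tau>::real. \<forall>u. A' u = complex_of_real (c * \<bar>u\<bar>) + \<i> * complex_of_real (\<tau> * u))"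
    using strict1_form by blast
  have pd: "levy_process M' L' \<and> levy_symbol M' L' A' \<and> nondegenerate M' L' \<and>
         alpha_semi_stable 1 A' \<and> alpha_stable 1 A' \<longrightarrow>
         (sobolev_index 1 A' \<longleftrightarrow> strictly_alpha_stable 1 A')"
    using part_d1 part_d2 by blast
  show ?thesis using pa pb pc pd by blast
qed

end
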